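(* Let $m\geq 0$ and $k\geq 1$ be integers and let $n$ be a nonnegative integer with $t(m,k)\leq n\leq t(m+1,k)-1$, where \[ t(s,k)= s\left(\left\lfloor \frac{s}{k}\right\rfloor +1\right)k-\binom{\lfloor s/k\rfloor +1}{2}k^2 . \] Then $b(n,k)=m$.
   Context: For a cell $u$ of the Young diagram of a partition $\lambda$, the hook length of $u$ is the number of cells $v$ of the diagram with $v=u$, or $v$ below $u$ in the same column, or $v$ to the right of $u$ in the same row. $\alpha_k(\lambda)$ is the number of cells of the Young diagram of $\lambda$ with hook length exactly $k$. $P(n)$ is the set of partitions of $n$ (with $P(0)$ containing only the empty partition), and $b(n,k)=\max\{\alpha_k(\lambda)\colon\lambda\in P(n)\}$. *)

theory Defs
  imports Main
begin

definition is_partition :: "nat list \<Rightarrow> bool" where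
  "is_partition p \<longleftrightarrow> sorted_wrt (\<ge>) p \<and> (\<forall>x\<in>set p. 0 < x)"

definition partitions :: "nat \<Rightarrow> nat list set" where
  "partitions n = {p. is_partition p \<and> sum_list p = n}"

text \<open>Young diagram: cell (i,j) = row i, column j (0-based), English convention.\<close>
definition young_cells :: "nat list \<Rightarrow> (nat \<times> nat) set" where
  "young_cells p = {(i, j). i < length p \<and> j < p ! i}"

definition hook_length :: "nat list \<Rightarrow> nat \<times> nat \<Rightarrow> nat" where
  "hook_length p u = card {v \<in> young_cells p.
      v = u \<or> (snd v = snd u \<and> fst v > fst u) \<or> (fst v = fst u \<and> snd v > snd u)}"

definition alpha :: "nat \<Rightarrow> nat list \<Rightarrow> nat" where
  "alpha k p = card {u \<in> young_cells p. hook_length p u = k}"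

definition b :: "nat \<Rightarrow> nat \<Rightarrow> nat" where
  "b n k = Max (alpha k ` partitions n)"

definition t :: "nat \<Rightarrow> nat \<Rightarrow> int" where
  "t s k = int s * (int (s div k) + 1) * int k - int ((s div k + 1) choose 2) * int k ^ 2"

end

theory Submission
  imports Defs
begin



definition beta :: "nat list \<Rightarrow> nat \<Rightarrow> nat" where
  "beta p i = p!i + (length p - 1 - i)"
definition Bset :: "nat list \<Rightarrow> nat set" where
  "Bset p = beta p ` {..<length p}"
definition Ak :: "nat \<Rightarrow> nat set \<Rightarrow> nat" where
  "Ak k B = card {y\<in>B. k \<le> y \<and> y - k \<notin> B}"
definition leg :: "nat list \<Rightarrow> nat \<Rightarrow> nat \<Rightarrow> nat" where
  "leg p i j = card {r. i < r \<and> r < length p \<and> j < p!r}"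

lemma hook_formula:
  assumes "i < length p" "j < p!i"
  shows "hook_length p (i,j) = (p!i - j) + leg p i j"
proof -
  define C where "C = (\<lambda>r. (r,j)) ` {r. i < r \<and> r < length p \<and> j < p!r}"
  define R where "R = (\<lambda>j'. (i,j')) ` {j<..<p!i}"
  have H: "{v \<in> young_cells p. v = (i,j) \<or> (snd v = snd (i,j) \<and> fst v > fst (i,j)) \<or> (fst v = fst (i,j) \<and> snd v > snd (i,j))}
      = insert (i,j) (C \<union> R)"
    using assms by (auto simp: young_cells_def C_def R_def)
  have fC: "finite C" unfolding C_def by auto
  have fR: "finite R" unfolding R_def by auto
  have nin: "(i,j) \<notin> C \<union> R" unfolding C_def R_def by auto
  have disj: "C \<inter> R = {}" unfolding C_def R_def by auto
  have cC: "card C = leg p i j" unfolding C_def leg_def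
    by (subst card_image) (auto simp: inj_on_def)
  have cR: "card R = p!i - Suc j" unfolding R_def
    by (subst card_image) (auto simp: inj_on_def)
  have "hook_length p (i,j) = Suc (card C + card R)"
    unfolding hook_length_def H using fC fR nin disj
    by (simp add: card_Un_disjoint)
  then show ?thesis using cC cR assms by simp
qed

lemma sorted_nth_le:
  fixes p :: "nat list"
  assumes "sorted_wrt (\<ge>) p" "i \<le> j" "j < length p"
  shows "p!j \<le> p!i"
proof (cases "i = j")
  case False
  then show ?thesis using assms by (auto simp: sorted_wrt_iff_nth_less)
qed simp

lemma beta_strict:
  assumes "sorted_wrt (\<ge>) p" "i < j" "j < length p"
  shows "beta p j < beta p i"
  using sorted_nth_le[OF assms(1) less_imp_le[OF assms(2)] assms(3)] assms(2,3)
  unfolding beta_def by linarith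

lemma leg_interval:
  assumes "sorted_wrt (\<ge>) p" "i < length p"
  shows "{r. i < r \<and> r < length p \<and> j < p!r} = {i<..<i + 1 + leg p i j}"
proof -
  define R where "R = {r. i < r \<and> r < length p \<and> j < p!r}"
  have fin: "finite R" unfolding R_def by (rule finite_subset[of _ "{..<length p}"]) auto
  have dc: "r' \<in> R" if "r \<in> R" "i < r'" "r' \<le> r" for r r'
  proof -
    have "p!r \<le> p!r'" using sorted_nth_le[OF assms(1) that(3)] that(1) unfolding R_def by auto
    then show ?thesis using that unfolding R_def by auto
  qed
  show ?thesis
  proof (cases "R = {}")
    case True
    then show ?thesis unfolding leg_def R_def[symmetric] by auto
  next
    case False
    define M where "M = Max R"
    have MR: "M \<in> R" using False fin unfolding M_def by simp
    have le: "r \<le> M" if "r \<in> R" for r using fin that unfolding M_def by simp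
    have iM: "i < M" using MR unfolding R_def by simp
    have eq: "R = {i<..M}"
    proof
      show "R \<subseteq> {i<..M}" using le unfolding R_def by auto
      show "{i<..M} \<subseteq> R" using dc[OF MR] by auto
    qed
    then have "card R = M - i" by simp
    then have "i + 1 + card R = Suc M" using iM by simp
    then show ?thesis unfolding leg_def R_def[symmetric] using eq
      by auto
  qed
qed


lemma leg_le:
  assumes "i < length p"
  shows "leg p i j \<le> length p - 1 - i"
proof -
  have "leg p i j \<le> card {i<..<length p}" unfolding leg_def
    by (rule card_mono) auto
  then show ?thesis by simp
qed

lemma leg_mono:
  assumes "j1 \<le> j2"
  shows "leg p i j2 \<le> leg p i j1"
  unfolding leg_def by (rule card_mono) (use assms in auto)

lemma hook_le_beta:
  assumes "i < length p" "j < p!i"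
  shows "hook_length p (i,j) \<le> beta p i" "1 \<le> hook_length p (i,j)"
  using hook_formula[OF assms] leg_le[OF assms(1), of j] assms unfolding beta_def by auto

lemma hook_strict:
  assumes "i < length p" "j1 < j2" "j2 < p!i"
  shows "hook_length p (i,j2) < hook_length p (i,j1)"
  using hook_formula[OF assms(1) assms(3)] hook_formula[OF assms(1), of j1]
    leg_mono[of j1 j2 p i] assms by auto

lemma hook_gap:
  assumes s: "sorted_wrt (\<ge>) p" and a: "i < length p" "j < p!i"
  shows "beta p i - hook_length p (i,j) \<notin> Bset p"
proof
  let ?l = "length p"
  define c where "c = i + 1 + leg p i j"
  have iv: "\<And>r. i < r \<Longrightarrow> r < ?l \<Longrightarrow> (j < p!r \<longleftrightarrow> r < c)"
    using leg_interval[OF s a(1), of j] unfolding c_def by (auto simp: set_eq_iff)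
  have cl: "c \<le> ?l" using leg_le[OF a(1), of j] a unfolding c_def by simp
  have hx: "beta p i - hook_length p (i,j) = j + ?l - c"
    using hook_formula[OF a] leg_le[OF a(1), of j] a unfolding beta_def c_def by simp
  assume "beta p i - hook_length p (i,j) \<in> Bset p"
  then obtain r where r: "r < ?l" "beta p r = j + ?l - c" using hx unfolding Bset_def by auto
  have h1: "1 \<le> hook_length p (i,j)" "hook_length p (i,j) \<le> beta p i" using hook_le_beta[OF a] by auto
  show False
  proof (cases "r \<le> i")
    case True
    then have "beta p i \<le> beta p r"
      using beta_strict[OF s, of r i] a by (cases "r = i") auto
    then show ?thesis using r hx h1 by linarith
  next
    case False
    then have ir: "i < r" by simp
    show ?thesis
    proof (cases "r < c")
      case True
      then have "j < p!r" using iv[OF ir r(1)] by simp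
      then show ?thesis using r True cl unfolding beta_def by linarith
    next
      case False
      then have "\<not> j < p!r" using iv[OF ir r(1)] by simp
      then show ?thesis using r False cl unfolding beta_def by linarith
    qed
  qed
qed


lemma beta_inj:
  assumes "sorted_wrt (\<ge>) p"
  shows "inj_on (beta p) {..<length p}"
proof (rule inj_onI)
  fix x y assume "x \<in> {..<length p}" "y \<in> {..<length p}" "beta p x = beta p y"
  then show "x = y" using beta_strict[OF assms, of x y] beta_strict[OF assms, of y x]
    by (cases x y rule: linorder_cases) auto
qed

lemma young_cells_Sigma: "young_cells p = (SIGMA i:{..<length p}. {..<p!i})"
  unfolding young_cells_def by auto

lemma finite_young_cells: "finite (young_cells p)"
  unfolding young_cells_Sigma by auto

lemma gap_count:
  assumes s: "sorted_wrt (\<ge>) p" and a: "i < length p"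
  shows "card {x. x < beta p i \<and> x \<notin> Bset p} = p!i"
proof -
  let ?l = "length p"
  have eq: "{x. x < beta p i \<and> x \<notin> Bset p} = {..<beta p i} - beta p ` {i<..<?l}"
  proof -
    have "x \<in> Bset p \<longleftrightarrow> x \<in> beta p ` {i<..<?l}" if "x < beta p i" for x
    proof
      assume "x \<in> Bset p"
      then obtain r where r: "r < ?l" "x = beta p r" unfolding Bset_def by auto
      have "i < r"
      proof (rule ccontr)
        assume "\<not> i < r"
        then have "beta p i \<le> beta p r" using beta_strict[OF s, of r i] a by (cases "r = i") auto
        then show False using that r by simp
      qed
      then show "x \<in> beta p ` {i<..<?l}" using r by auto
    qed (auto simp: Bset_def)
    then show ?thesis by auto
  qed
  have sub: "beta p ` {i<..<?l} \<subseteq> {..<beta p i}" using beta_strict[OF s] by auto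
  have inj: "inj_on (beta p) {i<..<?l}" using beta_inj[OF s] by (rule inj_on_subset) auto
  have "card ({..<beta p i} - beta p ` {i<..<?l}) = beta p i - card (beta p ` {i<..<?l})"
    using sub by (simp add: card_Diff_subset finite_subset)
  also have "\<dots> = beta p i - (?l - 1 - i)" using card_image[OF inj] by simp
  also have "\<dots> = p!i" unfolding beta_def by simp
  finally show ?thesis using eq by simp
qed

lemma hook_surj:
  assumes s: "sorted_wrt (\<ge>) p" and a: "i < length p"
    and x: "x < beta p i" "x \<notin> Bset p"
  shows "\<exists>j < p!i. beta p i - hook_length p (i,j) = x"
proof -
  define G where "G = {x. x < beta p i \<and> x \<notin> Bset p}"
  define f where "f j = beta p i - hook_length p (i,j)" for j
  have sub: "f ` {..<p!i} \<subseteq> G"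
  proof
    fix y assume "y \<in> f ` {..<p!i}"
    then obtain j where j: "j < p!i" "y = f j" by auto
    show "y \<in> G" using hook_le_beta[OF a j(1)] hook_gap[OF s a j(1)] j unfolding G_def f_def by auto
  qed
  have inj: "inj_on f {..<p!i}"
  proof (rule inj_onI)
    fix j1 j2 assume j: "j1 \<in> {..<p!i}" "j2 \<in> {..<p!i}" "f j1 = f j2"
    have b1: "hook_length p (i,j1) \<le> beta p i" "hook_length p (i,j2) \<le> beta p i"
      using hook_le_beta[OF a] j by auto
    show "j1 = j2"
    proof (rule ccontr)
      assume "j1 \<noteq> j2"
      then consider "j1 < j2" | "j2 < j1" by linarith
      then show False
        using hook_strict[OF a, of j1 j2] hook_strict[OF a, of j2 j1] j b1 unfolding f_def by (cases; auto)
    qed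
  qed
  have fG: "finite G" unfolding G_def by auto
  have "card (f ` {..<p!i}) = card G" using card_image[OF inj] gap_count[OF s a] unfolding G_def by simp
  then have "f ` {..<p!i} = G" using card_subset_eq[OF fG sub] by simp
  moreover have "x \<in> G" using x unfolding G_def by simp
  ultimately show ?thesis unfolding f_def by force
qed





lemma Ak_Bset:
  assumes s: "sorted_wrt (\<ge>) p"
  shows "Ak k (Bset p) = card {i. i < length p \<and> k \<le> beta p i \<and> beta p i - k \<notin> Bset p}"
proof -
  let ?I = "{i. i < length p \<and> k \<le> beta p i \<and> beta p i - k \<notin> Bset p}"
  have "{y\<in>Bset p. k \<le> y \<and> y - k \<notin> Bset p} = beta p ` ?I"
    unfolding Bset_def by auto
  moreover have "inj_on (beta p) ?I" using beta_inj[OF s] by (rule inj_on_subset) auto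
  ultimately show ?thesis unfolding Ak_def by (simp add: card_image)
qed

lemma alpha_eq:
  assumes s: "sorted_wrt (\<ge>) p" and k: "1 \<le> k"
  shows "alpha k p = Ak k (Bset p)"
proof -
  let ?I = "{i. i < length p \<and> k \<le> beta p i \<and> beta p i - k \<notin> Bset p}"
  let ?H = "{u \<in> young_cells p. hook_length p u = k}"
  have fI: "finite ?I" by auto
  have fH: "finite ?H" using finite_young_cells by auto
  have injH: "inj_on fst ?H"
  proof (rule inj_onI)
    fix u v assume u: "u \<in> ?H" and v: "v \<in> ?H" and e: "fst u = fst v"
    obtain i j1 where ui: "u = (i,j1)" by (cases u)
    obtain j2 where vi: "v = (i,j2)" using e ui by (cases v) auto
    have c: "i < length p" "j1 < p!i" "j2 < p!i" using u v ui vi by (auto simp: young_cells_def)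
    show "u = v"
    proof (rule ccontr)
      assume "u \<noteq> v"
      then have ne: "j1 \<noteq> j2" using ui vi by auto
      have h: "hook_length p (i,j1) = k" "hook_length p (i,j2) = k" using u v ui vi by auto
      show False
      proof (cases "j1 < j2")
        case True
        then show False using hook_strict[OF c(1) True c(3)] h by simp
      next
        case False
        then have lt: "j2 < j1" using ne by simp
        show False using hook_strict[OF c(1) lt c(2)] h by simp
      qed
    qed
  qed
  have subH: "fst ` ?H \<subseteq> ?I"
  proof
    fix i assume "i \<in> fst ` ?H"
    then obtain j where j: "(i,j) \<in> ?H" by force
    then have c: "i < length p" "j < p!i" by (auto simp: young_cells_def)
    have "hook_length p (i,j) = k" using j by simp
    then show "i \<in> ?I" using hook_le_beta[OF c] hook_gap[OF s c] c by simp
  qed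
  have le1: "alpha k p \<le> card ?I"
    unfolding alpha_def using card_image[OF injH] card_mono[OF fI subH] by simp
  have "\<forall>i\<in>?I. \<exists>j. j < p!i \<and> hook_length p (i,j) = k"
  proof
    fix i assume i: "i \<in> ?I"
    then obtain j where j: "j < p!i" "beta p i - hook_length p (i,j) = beta p i - k"
      using hook_surj[OF s, of i "beta p i - k"] k by auto
    have "hook_length p (i,j) \<le> beta p i" "1 \<le> hook_length p (i,j)" using hook_le_beta[of i p j] i j by auto
    then show "\<exists>j. j < p!i \<and> hook_length p (i,j) = k" using j i by (intro exI[of _ j]) auto
  qed
  then obtain g where g: "\<And>i. i \<in> ?I \<Longrightarrow> g i < p!i \<and> hook_length p (i, g i) = k" by metis
  have "(\<lambda>i. (i, g i)) ` ?I \<subseteq> ?H" using g by (auto simp: young_cells_def)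
  moreover have "inj_on (\<lambda>i. (i, g i)) ?I" by (auto simp: inj_on_def)
  ultimately have le2: "card ?I \<le> alpha k p"
  proof -
    assume sub: "(\<lambda>i. (i, g i)) ` ?I \<subseteq> ?H" and inj: "inj_on (\<lambda>i. (i, g i)) ?I"
    have "card ?I = card ((\<lambda>i. (i, g i)) ` ?I)" using card_image[OF inj] by simp
    also have "\<dots> \<le> card ?H" by (rule card_mono[OF fH sub])
    finally show ?thesis unfolding alpha_def .
  qed
  show ?thesis using le1 le2 Ak_Bset[OF s] by simp
qed

lemma sum_Bset:
  assumes s: "sorted_wrt (\<ge>) p"
  shows "2 * \<Sum>(Bset p) = 2 * sum_list p + length p * (length p - 1)"
proof -
  have "\<Sum>(Bset p) = (\<Sum>i<length p. beta p i)"
    unfolding Bset_def by (simp add: sum.reindex[OF beta_inj[OF s]])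
  also have "\<dots> = (\<Sum>i<length p. p!i + (length p - 1 - i))"
    unfolding beta_def by (rule refl)
  also have "\<dots> = (\<Sum>i<length p. p!i) + (\<Sum>i<length p. length p - 1 - i)"
    by (rule sum.distrib)
  also have "(\<Sum>i<length p. p!i) = sum_list p" by (simp add: sum_list_sum_nth atLeast0LessThan)
  finally have e: "\<Sum>(Bset p) = sum_list p + (\<Sum>i<length p. length p - 1 - i)" .
  have "2 * (\<Sum>i<n. n - 1 - i) = n * (n - 1)" for n :: nat
  proof -
    have "(\<Sum>i<n. n - 1 - i) = (\<Sum>i<n. i)"
      using sum.nat_diff_reindex[of "\<lambda>i. i" n] by simp
    moreover have "2 * (\<Sum>i<n. i) = n * (n - 1)" for n :: nat
    proof (induction n)
      case (Suc n)
      then show ?case by (cases n) (auto simp: algebra_simps)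
    qed simp
    ultimately show ?thesis by simp
  qed
  then show ?thesis using e by (simp add: algebra_simps)
qed

lemma card_Bset:
  assumes s: "sorted_wrt (\<ge>) p"
  shows "card (Bset p) = length p"
  unfolding Bset_def using card_image[OF beta_inj[OF s]] by simp




definition runner :: "nat set \<Rightarrow> nat \<Rightarrow> nat \<Rightarrow> nat set" where
  "runner B k i = {x. i + k*x \<in> B}"

lemma runner_finite: assumes "finite B" "1 \<le> k" shows "finite (runner B k i)"
proof -
  have "runner B k i = (\<lambda>x. i + k*x) -` B" unfolding runner_def by auto
  moreover have "inj (\<lambda>x. i + k*x)" using assms(2) by (auto simp: inj_def)
  ultimately show ?thesis using finite_vimageI[OF assms(1)] by simp
qed

lemma runner_bij:
  assumes "1 \<le> k"
  shows "bij_betw (\<lambda>(i,x). i + k*x) (SIGMA i:{..<k}. runner B k i) B"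
proof (rule bij_betwI')
  fix a b assume "a \<in> (SIGMA i:{..<k}. runner B k i)" "b \<in> (SIGMA i:{..<k}. runner B k i)"
  then obtain i x i' x' where a: "a = (i,x)" "i < k" and b: "b = (i',x')" "i' < k" by auto
  show "((\<lambda>(i,x). i + k*x) a = (\<lambda>(i,x). i + k*x) b) = (a = b)"
  proof
    assume e: "(\<lambda>(i,x). i + k*x) a = (\<lambda>(i,x). i + k*x) b"
    then have e': "i + k*x = i' + k*x'" using a b by simp
    have "(i + k*x) mod k = i" "(i' + k*x') mod k = i'" using a b by auto
    then have "i = i'" using e' by simp
    then show "a = b" using e' a b assms by simp
  qed simp
next
  fix a assume "a \<in> (SIGMA i:{..<k}. runner B k i)"
  then show "(\<lambda>(i,x). i + k*x) a \<in> B" unfolding runner_def by auto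
next
  fix y assume y: "y \<in> B"
  have "y mod k + k * (y div k) = y" by simp
  then show "\<exists>a\<in>(SIGMA i:{..<k}. runner B k i). y = (\<lambda>(i,x). i + k*x) a"
    using y assms by (intro bexI[of _ "(y mod k, y div k)"]) (auto simp: runner_def)
qed

lemma runner_card:
  assumes "finite B" "1 \<le> k"
  shows "card B = (\<Sum>i<k. card (runner B k i))"
proof -
  have "card B = card (SIGMA i:{..<k}. runner B k i)"
    using bij_betw_same_card[OF runner_bij[OF assms(2)]] by simp
  also have "\<dots> = (\<Sum>i<k. card (runner B k i))"
    using runner_finite[OF assms] by (simp add: card_SigmaI)
  finally show ?thesis .
qed

lemma runner_sum:
  assumes "finite B" "1 \<le> k"
  shows "\<Sum>B = (\<Sum>i<k. i * card (runner B k i) + k * \<Sum>(runner B k i))"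
proof -
  have "\<Sum>B = (\<Sum>a\<in>(SIGMA i:{..<k}. runner B k i). (\<lambda>(i,x). i + k*x) a)"
    using sum.reindex_bij_betw[OF runner_bij[OF assms(2)], of "\<lambda>y. y"] by simp
  also have "\<dots> = (\<Sum>i<k. \<Sum>x\<in>runner B k i. i + k*x)"
    using runner_finite[OF assms] by (subst sum.Sigma) auto
  also have "\<dots> = (\<Sum>i<k. i * card (runner B k i) + k * \<Sum>(runner B k i))"
    by (rule sum.cong) (simp_all add: sum.distrib sum_distrib_left)
  finally show ?thesis .
qed

lemma runner_Ak:
  assumes "finite B" "1 \<le> k"
  shows "Ak k B = (\<Sum>i<k. Ak 1 (runner B k i))"
proof -
  let ?f = "\<lambda>(i,x). i + k*x"
  let ?S = "SIGMA i:{..<k}. {x\<in>runner B k i. 1 \<le> x \<and> x - 1 \<notin> runner B k i}"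
  have inj: "inj_on ?f ?S"
    using bij_betw_imp_inj_on[OF runner_bij[OF assms(2)]] by (rule inj_on_subset) auto
  have eq: "{y\<in>B. k \<le> y \<and> y - k \<notin> B} = ?f ` ?S"
  proof
    show "{y\<in>B. k \<le> y \<and> y - k \<notin> B} \<subseteq> ?f ` ?S"
    proof
      fix y assume y: "y \<in> {y\<in>B. k \<le> y \<and> y - k \<notin> B}"
      define i where "i = y mod k"
      define x where "x = y div k"
      have yx: "y = i + k*x" unfolding i_def x_def by simp
      have ik: "i < k" unfolding i_def using assms by simp
      have x1: "1 \<le> x" using y ik yx by (cases x) auto
      have "y - k = i + k*(x-1)" using yx x1 by (cases x) (auto simp: algebra_simps)
      then have "(i,x) \<in> ?S" using y yx ik x1 by (auto simp: runner_def)
      then show "y \<in> ?f ` ?S" using yx by force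
    qed
  next
    show "?f ` ?S \<subseteq> {y\<in>B. k \<le> y \<and> y - k \<notin> B}"
    proof
      fix y assume "y \<in> ?f ` ?S"
      then obtain i x where ix: "i < k" "x \<in> runner B k i" "1 \<le> x" "x - 1 \<notin> runner B k i" "y = i + k*x"
        by auto
      have "y - k = i + k*(x-1)" using ix by (cases x) (auto simp: algebra_simps)
      moreover have "k \<le> y" using ix by (cases x) auto
      ultimately show "y \<in> {y\<in>B. k \<le> y \<and> y - k \<notin> B}" using ix by (auto simp: runner_def)
    qed
  qed
  have "Ak k B = card ?S" unfolding Ak_def eq using card_image[OF inj] by simp
  also have "\<dots> = (\<Sum>i<k. card {x\<in>runner B k i. 1 \<le> x \<and> x - 1 \<notin> runner B k i})"
    using runner_finite[OF assms] by (simp add: card_SigmaI)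
  finally show ?thesis unfolding Ak_def by simp
qed




lemma descents_le:
  assumes "finite U" "U \<noteq> {}"
  shows "Ak 1 U + card U \<le> Max U + 1"
proof -
  let ?M = "Max U"
  let ?D = "{x\<in>U. 1 \<le> x \<and> x - 1 \<notin> U}"
  have "(\<lambda>x. x - 1) ` ?D \<subseteq> {..<?M} - U"
  proof
    fix z assume "z \<in> (\<lambda>x. x - 1) ` ?D"
    then obtain x where x: "x \<in> U" "1 \<le> x" "x - 1 \<notin> U" "z = x - 1" by auto
    have "x \<le> ?M" using x assms by simp
    then show "z \<in> {..<?M} - U" using x by auto
  qed
  moreover have "inj_on (\<lambda>x. x - 1) ?D" by (auto simp: inj_on_def)
  ultimately have "card ?D \<le> card ({..<?M} - U)"
  proof -
    assume sub: "(\<lambda>x. x - 1) ` ?D \<subseteq> {..<?M} - U" and inj: "inj_on (\<lambda>x. x - 1) ?D"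
    have "card ?D = card ((\<lambda>x. x - 1) ` ?D)" using card_image[OF inj] by simp
    also have "\<dots> \<le> card ({..<?M} - U)" by (rule card_mono) (use sub in auto)
    finally show ?thesis .
  qed
  also have "{..<?M} - U = {..<?M} - (U - {?M})" by blast
  also have "card \<dots> = ?M - card (U - {?M})"
  proof -
    have "U - {?M} \<subseteq> {..<?M}"
    proof
      fix x assume "x \<in> U - {?M}"
      then show "x \<in> {..<?M}" using Max_ge[OF assms(1), of x] by auto
    qed
    then show ?thesis using assms by (simp add: card_Diff_subset finite_subset)
  qed
  also have "card (U - {?M}) = card U - 1" using assms by simp
  finally have "card ?D \<le> ?M - (card U - 1)" .
  moreover have "card U \<le> ?M + 1"
  proof -
    have "U \<subseteq> {..?M}" using assms by auto
    then show ?thesis using card_mono[of "{..?M}" U] by simp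
  qed
  ultimately show ?thesis unfolding Ak_def by linarith
qed

lemma runner_bound:
  assumes "finite U"
  shows "Ak 1 U * (Ak 1 U + 1) + card U * (card U - 1) \<le> 2 * \<Sum>U"
  using assms
proof (induction "card U" arbitrary: U)
  case 0
  then have "U = {}" by simp
  then show ?case by (simp add: Ak_def)
next
  case (Suc n)
  then have ne: "U \<noteq> {}" by auto
  define M where "M = Max U"
  define U' where "U' = U - {M}"
  have MU: "M \<in> U" using Suc ne unfolding M_def by simp
  have fU': "finite U'" using Suc unfolding U'_def by simp
  have cU': "card U' = n" using Suc MU unfolding U'_def by simp
  have IH: "Ak 1 U' * (Ak 1 U' + 1) + n * (n - 1) \<le> 2 * \<Sum>U'"
    using Suc(1)[of U'] fU' cU' by simp
  have sU: "\<Sum>U = \<Sum>U' + M" using Suc MU unfolding U'_def by (simp add: sum.remove)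
  have dl: "Ak 1 U + Suc n \<le> M + 1" using descents_le[OF Suc(3) ne] Suc(2) unfolding M_def by simp
  have sub: "{x\<in>U. 1 \<le> x \<and> x - 1 \<notin> U} \<subseteq> insert M {x\<in>U'. 1 \<le> x \<and> x - 1 \<notin> U'}"
    unfolding U'_def by auto
  have fin': "finite {x\<in>U'. 1 \<le> x \<and> x - 1 \<notin> U'}" using fU' by simp
  have "Ak 1 U \<le> card (insert M {x\<in>U'. 1 \<le> x \<and> x - 1 \<notin> U'})"
    unfolding Ak_def by (rule card_mono) (use fin' sub in auto)
  also have "\<dots> \<le> Ak 1 U' + 1" unfolding Ak_def using fin' by (simp add: card_insert_if)
  finally have d1: "Ak 1 U \<le> Ak 1 U' + 1" .
  define d where "d = Ak 1 U"
  define d' where "d' = Ak 1 U'"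
  have nn: "Suc n * (Suc n - 1) = n * (n - 1) + 2 * n" by (cases n) (auto simp: algebra_simps)
  have cU: "card U = Suc n" using Suc(2) by simp
  have "d * (d + 1) + Suc n * (Suc n - 1) \<le> 2 * \<Sum>U"
  proof (cases "d \<le> d'")
    case True
    then have "d * (d + 1) \<le> d' * (d' + 1)" by (intro mult_mono) auto
    then show ?thesis using IH sU dl nn unfolding d_def d'_def by linarith
  next
    case False
    then have dd: "d = d' + 1" using d1 unfolding d_def d'_def by simp
    then have "d * (d + 1) = d' * (d' + 1) + 2 * d" by (simp add: algebra_simps)
    then show ?thesis using IH sU dl nn dd unfolding d_def d'_def by linarith
  qed
  then show ?case unfolding cU d_def .
qed

lemma core_ineq:
  fixes x :: "nat \<Rightarrow> int"
  shows "(\<Sum>i<K. x i) * ((\<Sum>i<K. x i) - 1)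
     \<le> (\<Sum>i<K. 2 * int i * x i) + int K * (\<Sum>i<K. x i * (x i - 1))"
proof (induction K)
  case 0
  then show ?case by simp
next
  case (Suc K)
  define S1 where "S1 = (\<Sum>i<K. x i)"
  define S2 where "S2 = (\<Sum>i<K. x i * x i)"
  define S3 where "S3 = (\<Sum>i<K. 2 * int i * x i)"
  define y where "y = x K"
  have e2: "(\<Sum>i<K. x i * (x i - 1)) = S2 - S1"
    unfolding S1_def S2_def by (simp add: algebra_simps sum_subtractf)
  have nonneg: "0 \<le> (\<Sum>i<K. (x i - y) * (x i - y) - (x i - y))"
  proof (rule sum_nonneg)
    fix i
    have "0 \<le> (x i - y) * (x i - y - 1)"
      by (cases "x i - y \<le> 0") (auto intro: mult_nonpos_nonpos)
    then show "0 \<le> (x i - y) * (x i - y) - (x i - y)" by (simp add: algebra_simps)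
  qed
  have ex: "(\<Sum>i<K. (x i - y) * (x i - y) - (x i - y)) = S2 - 2 * y * S1 + int K * y * y - S1 + int K * y"
    unfolding S1_def S2_def
    by (simp add: algebra_simps sum.distrib sum_subtractf sum_distrib_left)
  have IH: "S1 * (S1 - 1) \<le> S3 + int K * (S2 - S1)" using Suc e2 unfolding S1_def S3_def by simp
  have A1: "(\<Sum>i<Suc K. x i) * ((\<Sum>i<Suc K. x i) - 1) = (S1 + y) * (S1 + y - 1)"
    unfolding S1_def y_def by simp
  have A2: "(\<Sum>i<Suc K. 2 * int i * x i) = S3 + 2 * int K * y" unfolding S3_def y_def by simp
  have A3: "(\<Sum>i<Suc K. x i * (x i - 1)) = S2 - S1 + y * (y - 1)" using e2 unfolding y_def by simp
  have A4: "S3 + 2 * int K * y + int (Suc K) * (S2 - S1 + y * (y - 1)) - (S1 + y) * (S1 + y - 1)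
     = (S3 + int K * (S2 - S1) - S1 * (S1 - 1)) + (S2 - 2 * y * S1 + int K * y * y - S1 + int K * y)"
    by (simp add: algebra_simps)
  show ?case unfolding A1 A2 A3 using A4 IH nonneg ex by linarith
qed




lemma tangent:
  fixes d q :: int
  shows "2 * (q + 1) * d - q * (q + 1) \<le> d * (d + 1)"
proof -
  have "0 \<le> (d - q) * (d - q - 1)"
    by (cases "d - q \<le> 0") (auto intro: mult_nonpos_nonpos)
  then show ?thesis by (simp add: algebra_simps)
qed

lemma set_bound:
  assumes B: "finite B" and k: "1 \<le> k"
  shows "int k * (2 * int (q+1) * int (Ak k B) - int k * int q * int (q+1))
     \<le> 2 * int (\<Sum>B) - int (card B) * (int (card B) - 1)"
proof -
  define n where "n i = card (runner B k i)" for i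
  define s where "s i = \<Sum>(runner B k i)" for i
  define d where "d i = Ak 1 (runner B k i)" for i
  have cB: "int (card B) = (\<Sum>i<k. int (n i))" using runner_card[OF B k] unfolding n_def by simp
  have sB: "int (\<Sum>B) = (\<Sum>i<k. int i * int (n i) + int k * int (s i))"
    using runner_sum[OF B k] unfolding n_def s_def by simp
  have aB: "int (Ak k B) = (\<Sum>i<k. int (d i))" using runner_Ak[OF B k] unfolding d_def by simp
  have core: "(\<Sum>i<k. int (n i)) * ((\<Sum>i<k. int (n i)) - 1)
     \<le> (\<Sum>i<k. 2 * int i * int (n i)) + int k * (\<Sum>i<k. int (n i) * (int (n i) - 1))"
    by (rule core_ineq)
  have rb: "int (d i) * (int (d i) + 1) + int (n i) * (int (n i) - 1) \<le> 2 * int (s i)" for i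
  proof -
    have "d i * (d i + 1) + n i * (n i - 1) \<le> 2 * s i"
      using runner_bound[OF runner_finite[OF B k, of i]] unfolding d_def n_def s_def .
    then have "int (d i * (d i + 1)) + int (n i * (n i - 1)) \<le> int (2 * s i)" by linarith
    moreover have "int (n i * (n i - 1)) = int (n i) * (int (n i) - 1)"
      by (cases "n i") (auto simp: algebra_simps)
    moreover have "int (d i * (d i + 1)) = int (d i) * (int (d i) + 1)" by (simp add: algebra_simps)
    ultimately show ?thesis by linarith
  qed
  have "int k * (2 * int (q+1) * int (Ak k B) - int k * int q * int (q+1))
      = int k * (\<Sum>i<k. 2 * int (q+1) * int (d i) - int q * int (q+1))"
    unfolding aB by (simp add: sum_subtractf sum_distrib_left)
  also have "\<dots> \<le> int k * (\<Sum>i<k. int (d i) * (int (d i) + 1))"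
  proof -
    have tg: "2 * int (q+1) * int (d i) - int q * int (q+1) \<le> int (d i) * (int (d i) + 1)" for i
      using tangent[of "int q" "int (d i)"] by (simp add: algebra_simps)
    show ?thesis by (intro mult_left_mono sum_mono tg) auto
  qed
  also have "\<dots> \<le> int k * (\<Sum>i<k. 2 * int (s i) - int (n i) * (int (n i) - 1))"
    using rb by (intro mult_left_mono sum_mono) (auto simp: algebra_simps)
  also have "\<dots> = 2 * (\<Sum>i<k. int i * int (n i) + int k * int (s i))
       - ((\<Sum>i<k. 2 * int i * int (n i)) + int k * (\<Sum>i<k. int (n i) * (int (n i) - 1)))"
    by (simp add: sum_subtractf sum.distrib sum_distrib_left algebra_simps)
  also have "\<dots> \<le> 2 * int (\<Sum>B) - int (card B) * (int (card B) - 1)"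
    using core unfolding sB cB by linarith
  finally show ?thesis .
qed




lemma two_choose2: "2 * (n choose 2) = n * (n - 1)"
proof (induction n)
  case (Suc n)
  have "Suc n choose 2 = n + (n choose 2)" by (simp add: numeral_2_eq_2)
  then show ?case using Suc by (cases n) (auto simp: algebra_simps)
qed simp

lemma partition_bound:
  assumes p: "is_partition p" and k: "1 \<le> k"
  shows "int k * (2 * int (q+1) * int (alpha k p) - int k * int q * int (q+1)) \<le> 2 * int (sum_list p)"
proof -
  have s: "sorted_wrt (\<ge>) p" using p unfolding is_partition_def by simp
  have fB: "finite (Bset p)" unfolding Bset_def by simp
  have "2 * \<Sum>(Bset p) = 2 * sum_list p + length p * (length p - 1)" by (rule sum_Bset[OF s])
  then have "2 * int (\<Sum>(Bset p)) = 2 * int (sum_list p) + int (length p * (length p - 1))" by linarith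
  moreover have "int (length p * (length p - 1)) = int (length p) * (int (length p) - 1)"
    by (cases "length p") (auto simp: algebra_simps)
  ultimately have e: "2 * int (\<Sum>(Bset p)) - int (card (Bset p)) * (int (card (Bset p)) - 1) = 2 * int (sum_list p)"
    using card_Bset[OF s] by simp
  show ?thesis using set_bound[OF fB k, of q] unfolding e alpha_eq[OF s k] .
qed

lemma t_twice:
  "2 * t s k = 2 * int s * (int (s div k) + 1) * int k - int (s div k + 1) * int (s div k) * int k ^ 2"
proof -
  have "int (2 * ((s div k + 1) choose 2)) = int ((s div k + 1) * (s div k))"
    using two_choose2[of "s div k + 1"] by simp
  then have "2 * int ((s div k + 1) choose 2) = int (s div k + 1) * int (s div k)"
    by (simp only: of_nat_mult of_nat_numeral)
  moreover have "2 * t s k = 2 * int s * (int (s div k) + 1) * int k - (2 * int ((s div k + 1) choose 2)) * int k ^ 2"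
    unfolding t_def by (simp add: algebra_simps)
  ultimately show ?thesis by simp
qed

lemma alpha_le_m:
  assumes p: "is_partition p" and k: "1 \<le> k" and n: "int (sum_list p) \<le> t (m+1) k - 1"
  shows "alpha k p \<le> m"
proof (rule ccontr)
  assume "\<not> alpha k p \<le> m"
  then have am: "m + 1 \<le> alpha k p" by simp
  define q where "q = (m+1) div k"
  have b: "int k * (2 * int (q+1) * int (alpha k p) - int k * int q * int (q+1)) \<le> 2 * int (sum_list p)"
    by (rule partition_bound[OF p k])
  have "int k * (2 * int (q+1) * int (m+1)) \<le> int k * (2 * int (q+1) * int (alpha k p))"
    using am by (intro mult_left_mono) auto
  moreover have "2 * t (m+1) k = int k * (2 * int (q+1) * int (m+1)) - int k * (int k * int q * int (q+1))"
    unfolding t_twice q_def by (simp add: algebra_simps power2_eq_square)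
  ultimately show False using b n by (simp add: algebra_simps)
qed




lemma strict_sorted_gap:
  fixes xs :: "nat list"
  assumes s: "sorted_wrt (<) xs" and ab: "u \<le> v" "v < length xs"
  shows "xs!u + (v - u) \<le> xs!v"
  using ab
proof (induction v)
  case 0
  then show ?case by simp
next
  case (Suc v)
  show ?case
  proof (cases "u = Suc v")
    case True then show ?thesis by simp
  next
    case False
    then have "u \<le> v" using Suc by simp
    then have "xs!u + (v - u) \<le> xs!v" using Suc by simp
    moreover have "xs!v < xs!(Suc v)" using s Suc(3) by (auto simp: sorted_wrt_iff_nth_less)
    ultimately show ?thesis using \<open>u \<le> v\<close> by linarith
  qed
qed

lemma list_from_set:
  assumes "finite B"
  shows "\<exists>p. sorted_wrt (\<ge>) p \<and> Bset p = B"
proof -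
  define xs where "xs = sorted_list_of_set B"
  define l where "l = length xs"
  have sx: "sorted_wrt (<) xs" unfolding xs_def by simp
  have setx: "set xs = B" unfolding xs_def using assms by simp
  define p where "p = map (\<lambda>i. xs ! (l - 1 - i) - (l - 1 - i)) [0..<l]"
  have lp: "length p = l" unfolding p_def by simp
  have pn: "p!i = xs ! (l - 1 - i) - (l - 1 - i)" if "i < l" for i
    using that unfolding p_def by simp
  have big: "l - 1 - i \<le> xs ! (l - 1 - i)" if "i < l" for i
  proof -
    have "xs!0 + (l - 1 - i - 0) \<le> xs ! (l - 1 - i)"
      using strict_sorted_gap[OF sx, of 0 "l - 1 - i"] that unfolding l_def by simp
    then show ?thesis by simp
  qed
  have bp: "beta p i = xs ! (l - 1 - i)" if "i < l" for i
    unfolding beta_def lp using pn[OF that] big[OF that] by simp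
  have sorted: "sorted_wrt (\<ge>) p"
    unfolding sorted_wrt_iff_nth_less lp
  proof (intro allI impI)
    fix i j assume ij: "i < j" "j < l"
    have "xs ! (l - 1 - j) + ((l - 1 - i) - (l - 1 - j)) \<le> xs ! (l - 1 - i)"
      using strict_sorted_gap[OF sx, of "l - 1 - j" "l - 1 - i"] ij unfolding l_def by simp
    moreover have "(l - 1 - i) - (l - 1 - j) = j - i" using ij by simp
    ultimately have g: "xs ! (l - 1 - j) + (j - i) \<le> xs ! (l - 1 - i)" by simp
    have e: "l - 1 - j + (j - i) = l - 1 - i" using ij by simp
    have b1: "l - 1 - j \<le> xs ! (l - 1 - j)" using big[of j] ij by simp
    have "(xs ! (l - 1 - j) + (j - i)) - (l - 1 - j + (j - i)) \<le> xs ! (l - 1 - i) - (l - 1 - j + (j - i))"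
      by (rule diff_le_mono[OF g])
    then have "xs ! (l - 1 - j) - (l - 1 - j) \<le> xs ! (l - 1 - i) - (l - 1 - j + (j - i))"
      by (simp only: add_diff_cancel_right)
    then have "xs ! (l - 1 - j) - (l - 1 - j) \<le> xs ! (l - 1 - i) - (l - 1 - i)"
      by (simp only: e)
    then show "p!j \<le> p!i" using pn[of i] pn[of j] ij by simp
  qed
  have "Bset p = (\<lambda>i. xs ! (l - 1 - i)) ` {..<l}"
    unfolding Bset_def lp by (rule image_cong[OF refl bp]) simp
  also have "\<dots> = set xs"
  proof
    show "(\<lambda>i. xs ! (l - 1 - i)) ` {..<l} \<subseteq> set xs"
    proof
      fix y assume "y \<in> (\<lambda>i. xs ! (l - 1 - i)) ` {..<l}"
      then obtain i where "i < l" "y = xs ! (l - 1 - i)" by blast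
      then show "y \<in> set xs" unfolding l_def by simp
    qed
    show "set xs \<subseteq> (\<lambda>i. xs ! (l - 1 - i)) ` {..<l}"
    proof
      fix y assume "y \<in> set xs"
      then obtain a where a: "a < l" "y = xs ! a" unfolding l_def by (auto simp: in_set_conv_nth)
      then have "y = xs ! (l - 1 - (l - 1 - a))" by simp
      moreover have "l - 1 - a \<in> {..<l}" using a by simp
      ultimately show "y \<in> (\<lambda>i. xs ! (l - 1 - i)) ` {..<l}" by (rule image_eqI)
    qed
  qed
  finally have "Bset p = B" using setx by simp
  then show ?thesis using sorted by blast
qed

lemma young_cells_append_zeros:
  assumes "\<forall>z\<in>set zs. z = 0"
  shows "young_cells (xs @ zs) = young_cells xs"
proof -
  have "(i < length (xs @ zs) \<and> j < (xs @ zs) ! i) \<longleftrightarrow> (i < length xs \<and> j < xs ! i)" for i j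
  proof (cases "i < length xs")
    case True then show ?thesis by (simp add: nth_append)
  next
    case False
    show ?thesis
    proof (cases "i < length (xs @ zs)")
      case True
      then have "i - length xs < length zs" using False by simp
      then have "zs ! (i - length xs) = 0" using assms nth_mem by blast
      then show ?thesis using False by (simp add: nth_append)
    qed (use False in simp)
  qed
  then show ?thesis unfolding young_cells_def by auto
qed

lemma alpha_same_cells:
  assumes "young_cells p = young_cells p'"
  shows "alpha k p = alpha k p'"
proof -
  have "hook_length p u = hook_length p' u" for u unfolding hook_length_def assms ..
  then show ?thesis unfolding alpha_def assms by simp
qed

lemma drop_zeros:
  assumes s: "sorted_wrt (\<ge>) (p :: nat list)"
  shows "\<exists>p'. is_partition p' \<and> sum_list p' = sum_list p \<and> alpha k p' = alpha k p"
proof -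
  define tw where "tw = takeWhile (\<lambda>x. 0 < x) p"
  define dw where "dw = dropWhile (\<lambda>x. 0 < x) p"
  have pe: "p = tw @ dw" unfolding tw_def dw_def by simp
  have zs: "\<forall>z\<in>set dw. z = 0"
  proof (cases dw)
    case Nil then show ?thesis by simp
  next
    case (Cons z zs)
    have "\<not> 0 < hd dw" using hd_dropWhile[of "\<lambda>x. 0 < x" p] Cons unfolding dw_def by simp
    then have z0: "z = 0" using Cons by simp
    have "sorted_wrt (\<ge>) (tw @ dw)" using s pe by simp
    then have "sorted_wrt (\<ge>) (z # zs)" using Cons by (simp only: sorted_wrt_append)
    then show ?thesis using Cons z0 by auto
  qed
  have ptw: "is_partition tw" unfolding is_partition_def
  proof
    have "sorted_wrt (\<ge>) (tw @ dw)" using s pe by simp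
    then show "sorted_wrt (\<ge>) tw" by (simp only: sorted_wrt_append)
    show "\<forall>x\<in>set tw. 0 < x" unfolding tw_def by (auto dest: set_takeWhileD)
  qed
  have "sum_list dw = 0" using zs by (induction dw) auto
  moreover have "sum_list p = sum_list tw + sum_list dw" by (subst pe) simp
  ultimately have "sum_list tw = sum_list p" by simp
  moreover have "alpha k tw = alpha k p"
    using alpha_same_cells[OF young_cells_append_zeros[OF zs, of tw]] pe by simp
  ultimately show ?thesis using ptw by blast
qed




definition Wset :: "nat \<Rightarrow> nat \<Rightarrow> nat \<Rightarrow> nat set" where
  "Wset d z a = (\<lambda>s. 2*s+1+z + (if Suc s = d then a else 0)) ` {..<d} \<union> (if z = 1 then {0} else {})"

lemma W_mono:
  assumes "s < s'" "s' < d"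
  shows "2*s+1+z + (if Suc s = d then a else 0) < 2*s'+1+z + (if Suc s' = d then (a::nat) else 0)"
  using assms by auto

lemma W_inj: "inj_on (\<lambda>s. 2*s+1+z + (if Suc s = d then a else 0)) {..<(d::nat)}"
proof (rule inj_onI)
  fix s s' assume "s \<in> {..<d}" "s' \<in> {..<d}" and e: "2*s+1+z + (if Suc s = d then a else 0) = 2*s'+1+z + (if Suc s' = d then (a::nat) else 0)"
  then show "s = s'" using W_mono[of s s' d z a] W_mono[of s' s d z a]
    by (cases s s' rule: linorder_cases) auto
qed

lemma W_finite: "finite (Wset d z a)"
  unfolding Wset_def by auto

lemma W_card: assumes "z \<le> 1" shows "card (Wset d z a) = d + z"
proof -
  let ?f = "\<lambda>s. 2*s+1+z + (if Suc s = d then a else 0)"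
  have c1: "card (?f ` {..<d}) = d" using card_image[OF W_inj] by simp
  have n0: "0 \<notin> ?f ` {..<d}" by auto
  show ?thesis
  proof (cases "z = 1")
    case True
    then have "Wset d z a = insert 0 (?f ` {..<d})" unfolding Wset_def by auto
    then show ?thesis using c1 n0 True by simp
  next
    case False
    then have "z = 0" using assms by simp
    then show ?thesis unfolding Wset_def using c1 by simp
  qed
qed

lemma sum_odd: "(\<Sum>s<d. 2*s+1) = (d::nat) * d"
  by (induction d) (auto simp: algebra_simps)

lemma sum_top: "(\<Sum>s<d. if Suc s = d then a else 0) = (if 0 < d then (a::nat) else 0)"
proof (cases d)
  case (Suc d')
  have "(\<Sum>s<d'. if Suc s = Suc d' then a else 0) = 0" by (rule sum.neutral) auto
  then show ?thesis using Suc by simp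
qed simp

lemma W_sum: "\<Sum>(Wset d z a) = d * d + z * d + (if 0 < d then a else 0)"
proof -
  let ?f = "\<lambda>s. 2*s+1+z + (if Suc s = d then a else 0)"
  have "\<Sum>(Wset d z a) = \<Sum>(?f ` {..<d})"
  proof (cases "z = 1")
    case True
    then have "Wset d z a = insert 0 (?f ` {..<d})" unfolding Wset_def by auto
    then show ?thesis by (simp add: sum.insert_if)
  qed (simp add: Wset_def)
  also have "\<dots> = (\<Sum>s<d. ?f s)" using sum.reindex[OF W_inj] by simp
  also have "\<dots> = (\<Sum>s<d. 2*s+1) + (\<Sum>s<d. z) + (\<Sum>s<d. if Suc s = d then a else 0)"
    by (simp only: sum.distrib)
  finally show ?thesis using sum_odd[of d] sum_top[of d a] by (simp add: algebra_simps)
qed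

lemma W_Ak: "d \<le> Ak 1 (Wset d z a)"
proof -
  let ?f = "\<lambda>s. 2*s+1+z + (if Suc s = d then a else 0)"
  have sub: "?f ` {..<d} \<subseteq> {y\<in>Wset d z a. 1 \<le> y \<and> y - 1 \<notin> Wset d z a}"
  proof
    fix y assume "y \<in> ?f ` {..<d}"
    then obtain s where s: "s < d" "y = ?f s" by auto
    have yW: "y \<in> Wset d z a" using s unfolding Wset_def by auto
    have "y - 1 \<notin> Wset d z a"
    proof
      assume "y - 1 \<in> Wset d z a"
      then consider "y - 1 = 0" "z = 1" | s' where "s' < d" "y - 1 = ?f s'"
        unfolding Wset_def by (auto split: if_splits)
      then show False
      proof cases
        case 1 then show False using s by simp
      next
        case 2
        have "s' < s"
        proof (rule ccontr)
          assume "\<not> s' < s"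
          then have "s \<le> s'" by simp
          then have "?f s \<le> ?f s'" using W_mono[of s s' d z a] 2 by (cases "s = s'") auto
          then show False using 2 s by simp
        qed
        then have "Suc s \<noteq> d \<or> True" by simp
        have "Suc s' \<noteq> d" using \<open>s' < s\<close> s by simp
        then have "?f s' = 2*s'+1+z" by simp
        moreover have "2*s + z \<le> y - 1" using s by auto
        ultimately show False using 2 \<open>s' < s\<close> by simp
      qed
    qed
    then show "y \<in> {y\<in>Wset d z a. 1 \<le> y \<and> y - 1 \<notin> Wset d z a}" using yW s by auto
  qed
  have "d = card (?f ` {..<d})" using card_image[OF W_inj] by simp
  also have "\<dots> \<le> Ak 1 (Wset d z a)" unfolding Ak_def
    by (rule card_mono[OF _ sub]) (simp add: W_finite)
  finally show ?thesis .
qed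




definition dd :: "nat \<Rightarrow> nat \<Rightarrow> nat \<Rightarrow> nat" where
  "dd q r i = q + (if i < r then 1 else 0)"
definition zz :: "nat \<Rightarrow> nat \<Rightarrow> nat" where
  "zz j i = (if i = j then 1 else 0)"
definition aa :: "nat \<Rightarrow> nat \<Rightarrow> nat" where
  "aa a i = (if i = 0 then a else 0)"
definition Bc :: "nat \<Rightarrow> nat \<Rightarrow> nat \<Rightarrow> nat \<Rightarrow> nat \<Rightarrow> nat set" where
  "Bc k q r j a = (\<Union>i<k. (\<lambda>x. i + k*x) ` Wset (dd q r i) (zz j i) (aa a i))"

lemma Bc_finite: "finite (Bc k q r j a)"
  unfolding Bc_def using W_finite by auto

lemma runner_Bc:
  assumes k: "1 \<le> k" and i: "i < k"
  shows "runner (Bc k q r j a) k i = Wset (dd q r i) (zz j i) (aa a i)"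
proof
  show "runner (Bc k q r j a) k i \<subseteq> Wset (dd q r i) (zz j i) (aa a i)"
  proof
    fix x assume "x \<in> runner (Bc k q r j a) k i"
    then obtain i' x' where i': "i' < k" "x' \<in> Wset (dd q r i') (zz j i') (aa a i')" "i + k*x = i' + k*x'"
      unfolding runner_def Bc_def by auto
    have m1: "(i + k*x) mod k = i" using i by simp
    have m2: "(i' + k*x') mod k = i'" using i'(1) by simp
    have "i = i'" using m1 m2 i'(3) by simp
    then have "x = x'" using i' k by simp
    then show "x \<in> Wset (dd q r i) (zz j i) (aa a i)" using i' \<open>i = i'\<close> by simp
  qed
  show "Wset (dd q r i) (zz j i) (aa a i) \<subseteq> runner (Bc k q r j a) k i"
    unfolding runner_def Bc_def using i by auto
qed

lemma sum_lt_r: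
  fixes r k :: nat
  assumes "r \<le> k"
  shows "(\<Sum>i<k. if i < r then f i else 0) = (\<Sum>i<r. (f i :: 'a :: comm_monoid_add))"
proof -
  have "(\<Sum>i<k. if i < r then f i else 0) = (\<Sum>i\<in>{i\<in>{..<k}. i < r}. f i)"
  proof -
    have "finite {..<k}" by simp
    from sum.inter_filter[OF this, of f "\<lambda>i. i < r"] show ?thesis by simp
  qed
  also have "{i\<in>{..<k}. i < r} = {..<r}" using assms by auto
  finally show ?thesis .
qed

lemma Bc_props:
  assumes k: "1 \<le> k" and r: "r \<le> k" and j: "j < k"
  shows "card (Bc k q r j a) = q*k + r + 1"
    and "\<Sum>(Bc k q r j a) = q * (\<Sum>i<k. i) + (\<Sum>i<r. i) + j
           + k * (k*q*q + r*(2*q+1) + dd q r j + (if 0 < dd q r 0 then a else 0))"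
    and "q*k + r \<le> Ak k (Bc k q r j a)"
proof -
  let ?B = "Bc k q r j a"
  have zle: "zz j i \<le> 1" for i unfolding zz_def by simp
  have run: "\<And>i. i \<in> {..<k} \<Longrightarrow> runner ?B k i = Wset (dd q r i) (zz j i) (aa a i)"
    using runner_Bc[OF k] by simp
  have s_dd: "(\<Sum>i<k. dd q r i) = q*k + r"
    unfolding dd_def using sum_lt_r[OF r, of "\<lambda>_. 1::nat"] by (simp add: sum.distrib)
  have s_zz: "(\<Sum>i<k. zz j i) = 1" unfolding zz_def using j by simp
  have "card ?B = (\<Sum>i<k. card (runner ?B k i))" by (rule runner_card[OF Bc_finite k])
  also have "\<dots> = (\<Sum>i<k. dd q r i + zz j i)" using run W_card[OF zle] by (intro sum.cong) auto
  finally show "card ?B = q*k + r + 1" using s_dd s_zz by (simp add: sum.distrib)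
  have "\<Sum>?B = (\<Sum>i<k. i * card (runner ?B k i) + k * \<Sum>(runner ?B k i))"
    by (rule runner_sum[OF Bc_finite k])
  also have "\<dots> = (\<Sum>i<k. i * dd q r i + i * zz j i + k * (dd q r i * dd q r i + zz j i * dd q r i
        + (if 0 < dd q r i then aa a i else 0)))"
    using run W_card[OF zle] W_sum by (intro sum.cong) (auto simp: algebra_simps)
  also have "\<dots> = (\<Sum>i<k. i * dd q r i) + (\<Sum>i<k. i * zz j i) + k * ((\<Sum>i<k. dd q r i * dd q r i)
        + (\<Sum>i<k. zz j i * dd q r i) + (\<Sum>i<k. if 0 < dd q r i then aa a i else 0))"
    by (simp only: sum.distrib sum_distrib_left[symmetric])
  also have "(\<Sum>i<k. i * dd q r i) = q * (\<Sum>i<k. i) + (\<Sum>i<r. i)"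
  proof -
    have "(\<Sum>i<k. i * dd q r i) = (\<Sum>i<k. q * i + (if i < r then i else 0))"
      unfolding dd_def by (intro sum.cong) (auto simp: algebra_simps)
    then show ?thesis using sum_lt_r[OF r, of "\<lambda>i. i"] by (simp add: sum.distrib sum_distrib_left)
  qed
  also have "(\<Sum>i<k. i * zz j i) = j" unfolding zz_def using j by (simp add: if_distrib cong: if_cong)
  also have "(\<Sum>i<k. dd q r i * dd q r i) = k*q*q + r*(2*q+1)"
  proof -
    have "(\<Sum>i<k. dd q r i * dd q r i) = (\<Sum>i<k. q*q + (if i < r then 2*q+1 else 0))"
      unfolding dd_def by (intro sum.cong) (auto simp: algebra_simps)
    then show ?thesis using sum_lt_r[OF r, of "\<lambda>_. 2*q+1"] by (simp add: sum.distrib)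
  qed
  also have "(\<Sum>i<k. zz j i * dd q r i) = dd q r j"
  proof -
    have "(\<Sum>i<k. zz j i * dd q r i) = (\<Sum>i<k. if i = j then dd q r i else 0)"
      unfolding zz_def by (intro sum.cong) auto
    then show ?thesis using j by simp
  qed
  also have "(\<Sum>i<k. if 0 < dd q r i then aa a i else 0) = (if 0 < dd q r 0 then a else 0)"
  proof -
    have "(\<Sum>i<k. if 0 < dd q r i then aa a i else 0) = (\<Sum>i<k. if i = 0 then (if 0 < dd q r 0 then a else 0) else 0)"
      unfolding aa_def by (intro sum.cong) auto
    then show ?thesis using k by simp
  qed
  finally show "\<Sum>?B = q * (\<Sum>i<k. i) + (\<Sum>i<r. i) + j
           + k * (k*q*q + r*(2*q+1) + dd q r j + (if 0 < dd q r 0 then a else 0))" by simp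
  have "q*k + r = (\<Sum>i<k. dd q r i)" using s_dd by simp
  also have "\<dots> \<le> (\<Sum>i<k. Ak 1 (runner ?B k i))" using run W_Ak by (intro sum_mono) auto
  also have "\<dots> = Ak k ?B" using runner_Ak[OF Bc_finite k] by simp
  finally show "q*k + r \<le> Ak k ?B" .
qed




lemma twice_sum_lt: "2 * (\<Sum>i<n. i) = n * (n - (1::nat))"
proof (induction n)
  case (Suc n)
  then show ?case by (cases n) (auto simp: algebra_simps)
qed simp

lemma exists_partition:
  assumes k: "1 \<le> k" and m: "1 \<le> m" and n1: "t m k \<le> int n" and n2: "int n \<le> t (m+1) k - 1"
  shows "\<exists>p\<in>partitions n. m \<le> alpha k p"
proof -
  define q where "q = m div k"
  define r where "r = m mod k"
  have mqr: "m = q*k + r" unfolding q_def r_def by simp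
  have rk: "r < k" unfolding r_def using k by simp
  define e where "e = nat (int n - t m k)"
  have ne: "int n = t m k + int e" unfolding e_def using n1 by simp
  define a where "a = e div k"
  define b where "b = e mod k"
  have eab: "e = k*a + b" unfolding a_def b_def by simp
  have bk: "b < k" unfolding b_def using k by simp
  define j where "j = (b + r) mod k"
  have jk: "j < k" unfolding j_def using k by simp
  have key: "j + k * dd q r j = b + r + k*q"
  proof (cases "b + r < k")
    case True
    then have "j = b + r" unfolding j_def by simp
    then show ?thesis unfolding dd_def by simp
  next
    case False
    then have jj: "j = b + r - k" unfolding j_def using bk rk by (simp add: mod_if)
    then have "j < r" using bk False by simp
    then show ?thesis unfolding dd_def using jj False by (simp add: algebra_simps)
  qed
  have dd0: "0 < dd q r 0" unfolding dd_def using m mqr by (cases q) auto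
  define B where "B = Bc k q r j a"
  have cB: "card B = m + 1" unfolding B_def using Bc_props(1)[OF k less_imp_le[OF rk] jk] mqr by simp
  have sB: "\<Sum>B = q * (\<Sum>i<k. i) + (\<Sum>i<r. i) + j
           + k * (k*q*q + r*(2*q+1) + dd q r j + a)"
    unfolding B_def using Bc_props(2)[OF k less_imp_le[OF rk] jk] dd0 by simp
  have aB: "m \<le> Ak k B" unfolding B_def using Bc_props(3)[OF k less_imp_le[OF rk] jk] mqr by simp
  have sk: "2 * int (\<Sum>i<k. i) = int k * (int k - 1)"
  proof -
    have "int (2 * (\<Sum>i<k. i)) = int (k * (k - 1))" using twice_sum_lt[of k] by simp
    then show ?thesis using k by (simp add: of_nat_diff)
  qed
  have sr: "2 * int (\<Sum>i<r. i) = int r * (int r - 1)"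
  proof -
    have "int (2 * (\<Sum>i<r. i)) = int (r * (r - 1))" using twice_sum_lt[of r] by simp
    then show ?thesis by (cases r) (auto simp: algebra_simps)
  qed
  have key': "int j + int k * int (dd q r j) = int b + int r + int k * int q"
    using key by (metis of_nat_add of_nat_mult)
  have s2: "2 * int (\<Sum>B) = int q * (int k * (int k - 1)) + int r * (int r - 1)
       + 2 * (int j + int k * int (dd q r j)) + 2 * int k * (int k * int q * int q + int r * (2 * int q + 1) + int a)"
  proof -
    have "2 * int (\<Sum>B) = int q * (2 * int (\<Sum>i<k. i)) + 2 * int (\<Sum>i<r. i)
       + 2 * (int j + int k * int (dd q r j)) + 2 * int k * (int k * int q * int q + int r * (2 * int q + 1) + int a)"
      unfolding sB by (simp add: algebra_simps del: of_nat_sum)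
    then show ?thesis unfolding sk sr .
  qed
  have t2: "2 * t m k = 2 * int m * (int q + 1) * int k - int (q + 1) * int q * int k ^ 2"
    using t_twice[of m k] unfolding q_def by simp
  have t2': "2 * t m k = 2 * (int q * int k + int r) * (int q + 1) * int k - (int q + 1) * int q * int k ^ 2"
    using t2 mqr by (simp add: algebra_simps)
  have eq: "2 * int (\<Sum>B) - int (card B) * (int (card B) - 1) = 2 * int n"
  proof -
    have "2 * int (\<Sum>B) - int (card B) * (int (card B) - 1)
        = int q * (int k * (int k - 1)) + int r * (int r - 1)
       + 2 * (int b + int r + int k * int q) + 2 * int k * (int k * int q * int q + int r * (2 * int q + 1) + int a)
       - (int q * int k + int r + 1) * (int q * int k + int r)"
      unfolding s2 key' cB mqr by simp
    also have "\<dots> = 2 * t m k + 2 * (int k * int a + int b)"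
      unfolding t2' by (simp add: algebra_simps power2_eq_square)
    also have "\<dots> = 2 * int n" using ne eab by simp
    finally show ?thesis .
  qed
  obtain p where ps: "sorted_wrt (\<ge>) p" and pB: "Bset p = B"
    using list_from_set[OF Bc_finite[of k q r j a]] unfolding B_def by blast
  have lp: "length p = m + 1" using card_Bset[OF ps] pB cB by simp
  have "2 * \<Sum>(Bset p) = 2 * sum_list p + length p * (length p - 1)" by (rule sum_Bset[OF ps])
  then have "2 * int (\<Sum>B) = 2 * int (sum_list p) + int (m + 1) * int m" using pB lp
    by (metis diff_add_inverse2 of_nat_add of_nat_mult of_nat_numeral)
  then have sp: "sum_list p = n" using eq cB by simp
  have ap: "m \<le> alpha k p" using alpha_eq[OF ps k] pB aB by simp
  obtain p' where p': "is_partition p'" "sum_list p' = sum_list p" "alpha k p' = alpha k p"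
    using drop_zeros[OF ps] by blast
  then show ?thesis using sp ap unfolding partitions_def by auto
qed




lemma length_le_sum: "(\<forall>x\<in>set p. 0 < x) \<Longrightarrow> length p \<le> sum_list (p :: nat list)"
  by (induction p) auto

lemma partitions_finite: "finite (partitions n)"
proof -
  have "partitions n \<subseteq> {xs. set xs \<subseteq> {..n} \<and> length xs \<le> n}"
  proof
    fix p assume "p \<in> partitions n"
    then have p: "is_partition p" "sum_list p = n" unfolding partitions_def by auto
    have "set p \<subseteq> {..n}" using member_le_sum_list p(2) by fastforce
    moreover have "length p \<le> n" using length_le_sum p unfolding is_partition_def by auto
    ultimately show "p \<in> {xs. set xs \<subseteq> {..n} \<and> length xs \<le> n}" by simp
  qed
  then show ?thesis using finite_lists_length_le[of "{..n}" n] finite_subset by blast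
qed

lemma replicate_partition: "replicate n 1 \<in> partitions n"
  unfolding partitions_def is_partition_def
  by (auto simp: sorted_wrt_iff_nth_less sum_list_replicate)

theorem theorem4p1:
  fixes m k n :: nat
  assumes "k \<ge> 1"
    and "t m k \<le> int n"
    and "int n \<le> t (m + 1) k - 1"
  shows "b n k = m"
proof -
  have fin: "finite (alpha k ` partitions n)" using partitions_finite by simp
  have ne: "alpha k ` partitions n \<noteq> {}" using replicate_partition by blast
  have up: "\<forall>y\<in>alpha k ` partitions n. y \<le> m"
  proof
    fix y assume "y \<in> alpha k ` partitions n"
    then obtain p where p: "p \<in> partitions n" "y = alpha k p" by auto
    then have "is_partition p" "sum_list p = n" unfolding partitions_def by auto
    then show "y \<le> m" using alpha_le_m[of p k m] assms p by simp
  qed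
  have lo: "\<exists>y\<in>alpha k ` partitions n. m \<le> y"
  proof (cases "m = 0")
    case True then show ?thesis using ne by auto
  next
    case False
    then obtain p where "p \<in> partitions n" "m \<le> alpha k p"
      using exists_partition[OF assms(1) _ assms(2,3)] by auto
    then show ?thesis by auto
  qed
  have "Max (alpha k ` partitions n) \<le> m" using up fin ne by simp
  moreover have "m \<le> Max (alpha k ` partitions n)" using lo fin Max_ge_iff ne by blast
  ultimately show ?thesis unfolding b_def by simp
qed



end
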